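(* Let $G_1$ and $G_2$ be two vertex-disjoint simple connected graphs with $|V(G_1)|=n_1$, $|V(G_2)|=n_2$, $|E(G_1)|=m_1$, $|E(G_2)|=m_2$. Then the vertex T-join $G_1\dot{\vee}_T G_2$ satisfies \[ F(G_1\dot{\vee}_T G_2)=8F(G_1)+F(G_2)+12n_2M_1(G_1)+3n_1M_1(G_2)+M_4(G_1)+3\,ReZM(G_1)+12m_1n_2^{2}+6m_2n_1^{2}+n_1n_2(n_1^2+n_2^2). \]
   Context: For a simple graph $G$ and $v\in V(G)$, $d_G(v)$ is the degree of $v$. Define $M_1(G)=\sum_{v\in V(G)}d_G(v)^2$, $F(G)=\sum_{v\in V(G)}d_G(v)^3$, $M_4(G)=\sum_{v\in V(G)}d_G(v)^4$, and $ReZM(G)=\sum_{uv\in E(G)}d_G(u)d_G(v)\,[d_G(u)+d_G(v)]$. The total graph $T(G)$ is obtained from $G$ (keeping all edges of $G$) by inserting a new vertex for each edge of $G$, joining each new vertex to the two end vertices of its edge, and joining by an edge each pair of new vertices corresponding to adjacent edges of $G$ (edges sharing an end vertex); let $I(G)$ denote the set of these new vertices, so $V(T(G))=V(G)\cup I(G)$. The vertex T-join $G_1\dot{\vee}_T G_2$ is the graph obtained from $T(G_1)$ and $G_2$ (taken vertex-disjoint) by joining each vertex of $V(G_1)$ to every vertex of $G_2$ by an edge. *)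

theory Defs
  imports Main
begin

definition simple_graph :: "'a set \<Rightarrow> 'a set set \<Rightarrow> bool" where
  "simple_graph V E \<longleftrightarrow> finite V \<and>
     (\<forall>e\<in>E. \<exists>u v. u \<in> V \<and> v \<in> V \<and> u \<noteq> v \<and> e = {u, v})"

definition graph_connected :: "'a set \<Rightarrow> 'a set set \<Rightarrow> bool" where
  "graph_connected V E \<longleftrightarrow> V \<noteq> {} \<and>
     (\<forall>u\<in>V. \<forall>v\<in>V. (u, v) \<in> {(x, y). {x, y} \<in> E}\<^sup>*)"

definition degree :: "'a set set \<Rightarrow> 'a \<Rightarrow> nat" where
  "degree E v = card {e \<in> E. v \<in> e}"

definition M1 :: "'a set \<Rightarrow> 'a set set \<Rightarrow> nat" where
  "M1 V E = (\<Sum>v\<in>V. degree E v ^ 2)"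

definition forgotten :: "'a set \<Rightarrow> 'a set set \<Rightarrow> nat" where
  "forgotten V E = (\<Sum>v\<in>V. degree E v ^ 3)"

definition M4 :: "'a set \<Rightarrow> 'a set set \<Rightarrow> nat" where
  "M4 V E = (\<Sum>v\<in>V. degree E v ^ 4)"

definition ReZM :: "'a set \<Rightarrow> 'a set set \<Rightarrow> nat" where
  "ReZM V E = (\<Sum>e\<in>E. (\<Prod>v\<in>e. degree E v) * (\<Sum>v\<in>e. degree E v))"

text \<open>Total graph: original vertices Inl v, new (edge) vertices Inr e.\<close>
definition total_V :: "'a set \<Rightarrow> 'a set set \<Rightarrow> ('a + 'a set) set" where
  "total_V V E = Inl ` V \<union> Inr ` E"

definition total_E :: "'a set \<Rightarrow> 'a set set \<Rightarrow> ('a + 'a set) set set" where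
  "total_E V E = (\<lambda>e. Inl ` e) ` E
     \<union> {{Inl v, Inr e} | v e. e \<in> E \<and> v \<in> e}
     \<union> {{Inr e, Inr f} | e f. e \<in> E \<and> f \<in> E \<and> e \<noteq> f \<and> e \<inter> f \<noteq> {}}"

text \<open>Vertex T-join of G1=(V1,E1) and G2=(V2,E2): T(G1) (tagged Inl) and G2 (tagged Inr),
  each vertex of V(G1) joined to every vertex of G2.\<close>
definition vtjoin_V :: "'a set \<Rightarrow> 'a set set \<Rightarrow> 'b set \<Rightarrow> 'b set set
    \<Rightarrow> (('a + 'a set) + 'b) set" where
  "vtjoin_V V1 E1 V2 E2 = Inl ` total_V V1 E1 \<union> Inr ` V2"

definition vtjoin_E :: "'a set \<Rightarrow> 'a set set \<Rightarrow> 'b set \<Rightarrow> 'b set set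
    \<Rightarrow> (('a + 'a set) + 'b) set set" where
  "vtjoin_E V1 E1 V2 E2 = (\<lambda>e. Inl ` e) ` total_E V1 E1 \<union> (\<lambda>e. Inr ` e) ` E2
     \<union> {{Inl (Inl v), Inr w} | v w. v \<in> V1 \<and> w \<in> V2}"

end

theory Submission imports Defs begin

lemma degV1:
  fixes V1 :: "'a set" and E1 :: "'a set set" and V2 :: "'b set" and E2 :: "'b set set"
  assumes "v \<in> V1" "finite V2" "finite E1"
  shows "degree (vtjoin_E V1 E1 V2 E2) (Inl (Inl v)) = 2 * degree E1 v + card V2"
proof -
  let ?S = "{e\<in>E1. v\<in>e}"
  define A :: "(('a + 'a set) + 'b) set set" where "A = (\<lambda>e. Inl ` Inl ` e) ` ?S"
  define B :: "(('a + 'a set) + 'b) set set" where "B = (\<lambda>e. {Inl (Inl v), Inl (Inr e)}) ` ?S"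
  define C :: "(('a + 'a set) + 'b) set set" where "C = (\<lambda>w. {Inl (Inl v), Inr w}) ` V2"
  have eq: "{x \<in> vtjoin_E V1 E1 V2 E2. Inl (Inl v) \<in> x} = A \<union> B \<union> C"
  proof (rule equalityI)
    show "{x \<in> vtjoin_E V1 E1 V2 E2. Inl (Inl v) \<in> x} \<subseteq> A \<union> B \<union> C"
    proof
      fix x assume "x \<in> {x \<in> vtjoin_E V1 E1 V2 E2. Inl (Inl v) \<in> x}"
      then have xJ: "x \<in> vtjoin_E V1 E1 V2 E2" and vx: "Inl (Inl v) \<in> x" by auto
      from xJ consider (a) t where "t \<in> total_E V1 E1" "x = Inl ` t"
        | (b) f where "f \<in> E2" "x = Inr ` f"
        | (c) u w where "u \<in> V1" "w \<in> V2" "x = {Inl (Inl u), Inr w}"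
        unfolding vtjoin_E_def by blast
      then show "x \<in> A \<union> B \<union> C"
      proof cases
        case (a t)
        with vx have vt: "Inl v \<in> t" by auto
        from a(1) consider (a1) e where "e \<in> E1" "t = Inl ` e"
          | (a2) u e where "e \<in> E1" "u \<in> e" "t = {Inl u, Inr e}"
          | (a3) e f where "t = {Inr e, Inr f}"
          unfolding total_E_def by blast
        then show ?thesis
        proof cases
          case (a1 e)
          with vt have "v \<in> e" by auto
          with a1 a(2) have "x \<in> A" unfolding A_def by auto
          then show ?thesis by simp
        next
          case (a2 u e)
          with vt have "u = v" by auto
          with a2 a(2) have "x \<in> B" unfolding B_def by auto
          then show ?thesis by simp
        next
          case (a3 e f)
          with vt show ?thesis by auto
        qed
      next
        case (b f)
        with vx show ?thesis by auto
      next
        case (c u w)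
        with vx have "u = v" by auto
        with c have "x \<in> C" unfolding C_def by auto
        then show ?thesis by simp
      qed
    qed
    have "A \<subseteq> vtjoin_E V1 E1 V2 E2"
    proof
      fix x assume "x \<in> A"
      then obtain e where e: "e \<in> E1" "x = Inl ` Inl ` e" unfolding A_def by blast
      have "Inl ` e \<in> total_E V1 E1" unfolding total_E_def using e(1) by blast
      then have h: "x \<in> (\<lambda>e. Inl ` e) ` total_E V1 E1" unfolding e(2) by (rule imageI)
      show "x \<in> vtjoin_E V1 E1 V2 E2" unfolding vtjoin_E_def by (rule UnI1[OF UnI1[OF h]])
    qed
    moreover have "B \<subseteq> vtjoin_E V1 E1 V2 E2"
    proof
      fix x assume "x \<in> B"
      then obtain e where e: "e \<in> E1" "v \<in> e" "x = {Inl (Inl v), Inl (Inr e)}" unfolding B_def by blast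
      have "{Inl v, Inr e} \<in> total_E V1 E1" unfolding total_E_def using e(1,2) by blast
      then have "Inl ` {Inl v, Inr e} \<in> (\<lambda>e. Inl ` e) ` total_E V1 E1" by (rule imageI)
      then have h: "x \<in> (\<lambda>e. Inl ` e) ` total_E V1 E1" unfolding e(3) by simp
      show "x \<in> vtjoin_E V1 E1 V2 E2" unfolding vtjoin_E_def by (rule UnI1[OF UnI1[OF h]])
    qed
    moreover have "C \<subseteq> vtjoin_E V1 E1 V2 E2"
    proof
      fix x assume "x \<in> C"
      then obtain w where w: "w \<in> V2" "x = {Inl (Inl v), Inr w}" unfolding C_def by blast
      have h: "x \<in> {{Inl (Inl v), Inr w} | v w. v \<in> V1 \<and> w \<in> V2}" using w assms(1) by blast
      show "x \<in> vtjoin_E V1 E1 V2 E2" unfolding vtjoin_E_def by (rule UnI2[OF h])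
    qed
    moreover have "\<forall>x\<in>A \<union> B \<union> C. Inl (Inl v) \<in> x" unfolding A_def B_def C_def by auto
    ultimately show "A \<union> B \<union> C \<subseteq> {x \<in> vtjoin_E V1 E1 V2 E2. Inl (Inl v) \<in> x}"
      by (intro Un_least) (auto simp del: insert_iff)
  qed
  have fin: "finite ?S" using assms by simp
  have cA: "card A = degree E1 v" unfolding A_def degree_def
    by (rule card_image) (auto simp: inj_on_def inj_image_eq_iff)
  have cB: "card B = degree E1 v" unfolding B_def degree_def
    by (rule card_image) (auto simp: inj_on_def doubleton_eq_iff)
  have cC: "card C = card V2" unfolding C_def
    by (rule card_image) (auto simp: inj_on_def doubleton_eq_iff)
  have d1: "A \<inter> B = {}" "(A \<union> B) \<inter> C = {}" unfolding A_def B_def C_def by auto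
  have fA: "finite A" "finite B" "finite C" unfolding A_def B_def C_def using fin assms by auto
  show ?thesis unfolding degree_def[of "vtjoin_E V1 E1 V2 E2"] eq
    using card_Un_disjoint fA d1 cA cB cC by (simp add: card_Un_disjoint)
qed

lemma degV2:
  fixes V1 :: "'a set" and E1 :: "'a set set" and V2 :: "'b set" and E2 :: "'b set set"
  assumes "w \<in> V2" "finite V1" "finite E2"
  shows "degree (vtjoin_E V1 E1 V2 E2) (Inr w) = degree E2 w + card V1"
proof -
  let ?S = "{e\<in>E2. w\<in>e}"
  define A :: "(('a + 'a set) + 'b) set set" where "A = (\<lambda>e. Inr ` e) ` ?S"
  define C :: "(('a + 'a set) + 'b) set set" where "C = (\<lambda>v. {Inl (Inl v), Inr w}) ` V1"
  have eq: "{x \<in> vtjoin_E V1 E1 V2 E2. Inr w \<in> x} = A \<union> C"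
  proof (rule equalityI)
    show "{x \<in> vtjoin_E V1 E1 V2 E2. Inr w \<in> x} \<subseteq> A \<union> C"
    proof
      fix x assume "x \<in> {x \<in> vtjoin_E V1 E1 V2 E2. Inr w \<in> x}"
      then have xJ: "x \<in> vtjoin_E V1 E1 V2 E2" and vx: "Inr w \<in> x" by auto
      from xJ consider (a) t where "t \<in> total_E V1 E1" "x = Inl ` t"
        | (b) f where "f \<in> E2" "x = Inr ` f"
        | (c) u w' where "u \<in> V1" "w' \<in> V2" "x = {Inl (Inl u), Inr w'}"
        unfolding vtjoin_E_def by blast
      then show "x \<in> A \<union> C"
      proof cases
        case (a t)
        with vx show ?thesis by auto
      next
        case (b f)
        with vx have "w \<in> f" by auto
        with b have "x \<in> A" unfolding A_def by auto
        then show ?thesis by simp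
      next
        case (c u w')
        with vx have "w' = w" by auto
        with c have "x \<in> C" unfolding C_def by auto
        then show ?thesis by simp
      qed
    qed
    have "A \<subseteq> vtjoin_E V1 E1 V2 E2"
    proof
      fix x assume "x \<in> A"
      then obtain e where e: "e \<in> E2" "x = Inr ` e" unfolding A_def by blast
      then have h: "x \<in> (\<lambda>e. Inr ` e) ` E2" by simp
      show "x \<in> vtjoin_E V1 E1 V2 E2" unfolding vtjoin_E_def by (rule UnI1[OF UnI2[OF h]])
    qed
    moreover have "C \<subseteq> vtjoin_E V1 E1 V2 E2"
    proof
      fix x assume "x \<in> C"
      then obtain v where w: "v \<in> V1" "x = {Inl (Inl v), Inr w}" unfolding C_def by blast
      have h: "x \<in> {{Inl (Inl v), Inr w} | v w. v \<in> V1 \<and> w \<in> V2}" using w assms(1) by blast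
      show "x \<in> vtjoin_E V1 E1 V2 E2" unfolding vtjoin_E_def by (rule UnI2[OF h])
    qed
    moreover have "\<forall>x\<in>A \<union> C. Inr w \<in> x" unfolding A_def C_def by auto
    ultimately show "A \<union> C \<subseteq> {x \<in> vtjoin_E V1 E1 V2 E2. Inr w \<in> x}"
      by (intro Un_least) (auto simp del: insert_iff)
  qed
  have fin: "finite ?S" using assms by simp
  have cA: "card A = degree E2 w" unfolding A_def degree_def
    by (rule card_image) (auto simp: inj_on_def inj_image_eq_iff)
  have cC: "card C = card V1" unfolding C_def
    by (rule card_image) (auto simp: inj_on_def doubleton_eq_iff)
  have d1: "A \<inter> C = {}" unfolding A_def C_def by auto
  have fA: "finite A" "finite C" unfolding A_def C_def using fin assms by auto
  show ?thesis unfolding degree_def[of "vtjoin_E V1 E1 V2 E2"] eq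
    using fA d1 cA cC by (simp add: card_Un_disjoint)
qed

lemma double_count:
  assumes "finite V" "\<forall>e\<in>E. e \<subseteq> V" "finite E"
  shows "(\<Sum>e\<in>E. \<Sum>v\<in>e. g v) = (\<Sum>v\<in>V. degree E v * (g v::nat))"
proof -
  have "(\<Sum>e\<in>E. \<Sum>v\<in>e. g v) = (\<Sum>e\<in>E. \<Sum>v\<in>V. if v \<in> e then g v else 0)"
  proof (rule sum.cong[OF refl])
    fix e assume "e \<in> E"
    then have "e = {v\<in>V. v \<in> e}" using assms by auto
    then show "(\<Sum>v\<in>e. g v) = (\<Sum>v\<in>V. if v \<in> e then g v else 0)"
      using sum.inter_filter[OF assms(1), of g "\<lambda>v. v\<in>e"] by simp
  qed
  also have "\<dots> = (\<Sum>v\<in>V. \<Sum>e\<in>E. if v \<in> e then g v else 0)" by (rule sum.swap)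
  also have "\<dots> = (\<Sum>v\<in>V. degree E v * g v)"
  proof (rule sum.cong[OF refl])
    fix v
    have "(\<Sum>e\<in>E. if v \<in> e then g v else 0) = (\<Sum>e\<in>{e\<in>E. v\<in>e}. g v)"
      using sum.inter_filter[OF assms(3), of "\<lambda>_. g v" "\<lambda>e. v\<in>e"] by simp
    then show "(\<Sum>e\<in>E. if v \<in> e then g v else 0) = degree E v * g v"
      by (simp add: degree_def)
  qed
  finally show ?thesis .
qed

lemma sg_facts:
  assumes "simple_graph V E"
  shows "finite V" "finite E" "\<forall>e\<in>E. e \<subseteq> V" "\<forall>e\<in>E. card e = 2"
proof -
  have d: "\<forall>e\<in>E. \<exists>u v. u \<in> V \<and> v \<in> V \<and> u \<noteq> v \<and> e = {u, v}"
    using assms unfolding simple_graph_def by (rule conjunct2)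
  show fV: "finite V" using assms unfolding simple_graph_def by (rule conjunct1)
  show sub: "\<forall>e\<in>E. e \<subseteq> V"
  proof
    fix e assume "e \<in> E"
    with d obtain u v where "u \<in> V" "v \<in> V" "e = {u, v}" by blast
    then show "e \<subseteq> V" by simp
  qed
  then have "E \<subseteq> Pow V" by blast
  then show "finite E" by (rule finite_subset) (simp add: fV)
  show "\<forall>e\<in>E. card e = 2"
  proof
    fix e assume "e \<in> E"
    with d obtain u v where "u \<noteq> v" "e = {u, v}" by blast
    then show "card e = 2" by simp
  qed
qed

lemma handshake:
  assumes "simple_graph V E"
  shows "(\<Sum>v\<in>V. degree E v) = 2 * card E"
proof -
  note f = sg_facts[OF assms]
  have "(\<Sum>e\<in>E. \<Sum>v\<in>e. 1::nat) = (\<Sum>v\<in>V. degree E v * 1)"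
    by (rule double_count) (use f in auto)
  moreover have "(\<Sum>e\<in>E. \<Sum>v\<in>e. 1::nat) = (\<Sum>e\<in>E. 2)" using f(4) by simp
  ultimately show ?thesis by simp
qed


lemma sg_edge:
  assumes "simple_graph V E" "e \<in> E"
  shows "\<exists>u v. u \<in> V \<and> v \<in> V \<and> u \<noteq> v \<and> e = {u, v}"
proof -
  have d: "\<forall>e\<in>E. \<exists>u v. u \<in> V \<and> v \<in> V \<and> u \<noteq> v \<and> e = {u, v}"
    using assms(1) unfolding simple_graph_def by (rule conjunct2)
  then show ?thesis using assms(2) by (rule bspec)
qed

lemma degE1:
  fixes V1 :: "'a set" and E1 :: "'a set set" and V2 :: "'b set" and E2 :: "'b set set"
  assumes sg: "simple_graph V1 E1" and e: "e \<in> E1"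
  shows "degree (vtjoin_E V1 E1 V2 E2) (Inl (Inr e)) = (\<Sum>u\<in>e. degree E1 u)"
proof -
  note f = sg_facts[OF sg]
  obtain a b where ab: "a \<in> V1" "b \<in> V1" "a \<noteq> b" "e = {a, b}" using sg_edge[OF sg e] by blast
  define X where "X = {f\<in>E1. a \<in> f}"
  define Y where "Y = {f\<in>E1. b \<in> f}"
  define P :: "(('a + 'a set) + 'b) set set" where "P = (\<lambda>u. {Inl (Inl u), Inl (Inr e)}) ` e"
  define Q :: "(('a + 'a set) + 'b) set set" where "Q = (\<lambda>f. {Inl (Inr e), Inl (Inr f)}) ` ((X \<union> Y) - {e})"
  have XY: "X \<union> Y = {f\<in>E1. f \<inter> e \<noteq> {}}" unfolding X_def Y_def ab(4) by auto
  have eq: "{x \<in> vtjoin_E V1 E1 V2 E2. Inl (Inr e) \<in> x} = P \<union> Q"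
  proof (rule equalityI)
    show "{x \<in> vtjoin_E V1 E1 V2 E2. Inl (Inr e) \<in> x} \<subseteq> P \<union> Q"
    proof
      fix x assume "x \<in> {x \<in> vtjoin_E V1 E1 V2 E2. Inl (Inr e) \<in> x}"
      then have xJ: "x \<in> vtjoin_E V1 E1 V2 E2" and vx: "Inl (Inr e) \<in> x" by auto
      from xJ consider (a) t where "t \<in> total_E V1 E1" "x = Inl ` t"
        | (b) f where "f \<in> E2" "x = Inr ` f"
        | (c) u w where "u \<in> V1" "w \<in> V2" "x = {Inl (Inl u), Inr w}"
        unfolding vtjoin_E_def by blast
      then show "x \<in> P \<union> Q"
      proof cases
        case (a t)
        with vx have vt: "Inr e \<in> t" by auto
        from a(1) consider (a1) e' where "e' \<in> E1" "t = Inl ` e'"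
          | (a2) u e' where "e' \<in> E1" "u \<in> e'" "t = {Inl u, Inr e'}"
          | (a3) e1 f1 where "e1 \<in> E1" "f1 \<in> E1" "e1 \<noteq> f1" "e1 \<inter> f1 \<noteq> {}" "t = {Inr e1, Inr f1}"
          unfolding total_E_def by blast
        then show ?thesis
        proof cases
          case (a1 e')
          with vt show ?thesis by auto
        next
          case (a2 u e')
          with vt have "e' = e" by auto
          with a2 a(2) have "x \<in> P" unfolding P_def by auto
          then show ?thesis by simp
        next
          case (a3 e1 f1)
          with vt have "e = e1 \<or> e = f1" by auto
          then obtain g where g: "g \<in> E1" "g \<noteq> e" "g \<inter> e \<noteq> {}" "t = {Inr e, Inr g}"
            using a3 by auto
          then have "g \<in> (X \<union> Y) - {e}" unfolding XY by auto
          moreover have "x = {Inl (Inr e), Inl (Inr g)}" using a(2) g(4) by simp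
          ultimately have "x \<in> Q" unfolding Q_def by blast
          then show ?thesis by simp
        qed
      next
        case (b f)
        with vx show ?thesis by auto
      next
        case (c u w)
        with vx show ?thesis by auto
      qed
    qed
    have "P \<subseteq> vtjoin_E V1 E1 V2 E2"
    proof
      fix x assume "x \<in> P"
      then obtain u where u: "u \<in> e" "x = {Inl (Inl u), Inl (Inr e)}" unfolding P_def by blast
      have "{Inl u, Inr e} \<in> total_E V1 E1" unfolding total_E_def using e u(1) by blast
      then have "Inl ` {Inl u, Inr e} \<in> (\<lambda>e. Inl ` e) ` total_E V1 E1" by (rule imageI)
      then have h: "x \<in> (\<lambda>e. Inl ` e) ` total_E V1 E1" unfolding u(2) by simp
      show "x \<in> vtjoin_E V1 E1 V2 E2" unfolding vtjoin_E_def by (rule UnI1[OF UnI1[OF h]])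
    qed
    moreover have "Q \<subseteq> vtjoin_E V1 E1 V2 E2"
    proof
      fix x assume "x \<in> Q"
      then obtain g where g: "g \<in> (X \<union> Y) - {e}" "x = {Inl (Inr e), Inl (Inr g)}" unfolding Q_def by blast
      then have g2: "g \<in> E1" "e \<noteq> g" "e \<inter> g \<noteq> {}" unfolding XY by auto
      have "{Inr e, Inr g} \<in> total_E V1 E1" unfolding total_E_def using e g2 by blast
      then have "Inl ` {Inr e, Inr g} \<in> (\<lambda>e. Inl ` e) ` total_E V1 E1" by (rule imageI)
      then have h: "x \<in> (\<lambda>e. Inl ` e) ` total_E V1 E1" unfolding g(2) by simp
      show "x \<in> vtjoin_E V1 E1 V2 E2" unfolding vtjoin_E_def by (rule UnI1[OF UnI1[OF h]])
    qed
    moreover have "\<forall>x\<in>P \<union> Q. Inl (Inr e) \<in> x" unfolding P_def Q_def by auto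
    ultimately show "P \<union> Q \<subseteq> {x \<in> vtjoin_E V1 E1 V2 E2. Inl (Inr e) \<in> x}"
      by (intro Un_least) (auto simp del: insert_iff)
  qed
  have cP: "card P = 2" unfolding P_def ab(4) using ab(3) by (auto simp: doubleton_eq_iff)
  have fXY: "finite X" "finite Y" unfolding X_def Y_def using f by auto
  have cQ: "card Q = card ((X \<union> Y) - {e})" unfolding Q_def
    by (rule card_image) (auto simp: inj_on_def doubleton_eq_iff)
  have XiY: "X \<inter> Y = {e}"
  proof
    show "X \<inter> Y \<subseteq> {e}"
    proof
      fix g assume g: "g \<in> X \<inter> Y"
      then have "g \<in> E1" unfolding X_def by simp
      then obtain x y where "g = {x, y}" using sg_edge[OF sg] by blast
      with g ab show "g \<in> {e}" unfolding X_def Y_def by auto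
    qed
    show "{e} \<subseteq> X \<inter> Y" unfolding X_def Y_def using e ab by auto
  qed
  have cU: "card (X \<union> Y) + 1 = card X + card Y"
    using card_Un_Int[OF fXY] XiY by simp
  have eU: "e \<in> X \<union> Y" using XiY by auto
  have cD: "card ((X \<union> Y) - {e}) + 1 = card (X \<union> Y)"
    using card_Diff_singleton[OF eU] fXY eU card_gt_0_iff[of "X \<union> Y"] by auto
  have dj: "P \<inter> Q = {}"
  proof (rule ccontr)
    assume "P \<inter> Q \<noteq> {}"
    then obtain x where x: "x \<in> P" "x \<in> Q" by blast
    from x(1) obtain u where "x = {Inl (Inl u), Inl (Inr e)}" unfolding P_def by blast
    then have "Inl (Inl u) \<in> x" by simp
    moreover from x(2) obtain g where "x = {Inl (Inr e), Inl (Inr g)}" unfolding Q_def by blast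
    ultimately show False by simp
  qed
  have fPQ: "finite P" "finite Q" unfolding P_def Q_def using fXY ab by auto
  have "card (P \<union> Q) = card X + card Y"
    using card_Un_disjoint[OF fPQ dj] cP cQ cU cD by simp
  moreover have "(\<Sum>u\<in>e. degree E1 u) = card X + card Y"
    unfolding ab(4) X_def Y_def degree_def using ab(3) by simp
  ultimately show ?thesis unfolding degree_def[of "vtjoin_E V1 E1 V2 E2"] eq by simp
qed

theorem theorem7:
  fixes V1 :: "'a set" and E1 :: "'a set set" and V2 :: "'b set" and E2 :: "'b set set"
  assumes "simple_graph V1 E1" and "graph_connected V1 E1"
    and "simple_graph V2 E2" and "graph_connected V2 E2"
  shows "forgotten (vtjoin_V V1 E1 V2 E2) (vtjoin_E V1 E1 V2 E2)
    = 8 * forgotten V1 E1 + forgotten V2 E2 + 12 * card V2 * M1 V1 E1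
      + 3 * card V1 * M1 V2 E2 + M4 V1 E1 + 3 * ReZM V1 E1
      + 12 * card E1 * card V2 ^ 2 + 6 * card E2 * card V1 ^ 2
      + card V1 * card V2 * (card V1 ^ 2 + card V2 ^ 2)"
proof -
  note f1 = sg_facts[OF assms(1)] and f2 = sg_facts[OF assms(3)]
  let ?J = "vtjoin_E V1 E1 V2 E2"
  let ?D = "\<lambda>x. degree ?J x ^ 3"
  define n1 where "n1 = card V1"
  define n2 where "n2 = card V2"
  have VV: "vtjoin_V V1 E1 V2 E2 = Inl ` (Inl ` V1 \<union> Inr ` E1) \<union> Inr ` V2"
    unfolding vtjoin_V_def total_V_def by simp
  have s0: "forgotten (vtjoin_V V1 E1 V2 E2) ?J
      = (\<Sum>v\<in>V1. ?D (Inl (Inl v))) + (\<Sum>e\<in>E1. ?D (Inl (Inr e))) + (\<Sum>w\<in>V2. ?D (Inr w))"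
  proof -
    have fa: "finite (Inl ` (Inl ` V1 \<union> Inr ` E1) :: (('a + 'a set) + 'b) set)" using f1 by simp
    have fb: "finite (Inr ` V2 :: (('a + 'a set) + 'b) set)" using f2 by simp
    have dab: "(Inl ` (Inl ` V1 \<union> Inr ` E1) :: (('a + 'a set) + 'b) set) \<inter> Inr ` V2 = {}" by blast
    have fc: "finite (Inl ` V1 :: ('a + 'a set) set)" "finite (Inr ` E1 :: ('a + 'a set) set)" using f1 by simp_all
    have dc: "(Inl ` V1 :: ('a + 'a set) set) \<inter> Inr ` E1 = {}" by blast
    have "forgotten (vtjoin_V V1 E1 V2 E2) ?J = (\<Sum>x\<in>Inl ` (Inl ` V1 \<union> Inr ` E1). ?D x) + (\<Sum>x\<in>Inr ` V2. ?D x)"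
      unfolding forgotten_def VV by (rule sum.union_disjoint[OF fa fb dab])
    also have "(\<Sum>x\<in>Inl ` (Inl ` V1 \<union> Inr ` E1). ?D x) = (\<Sum>y\<in>Inl ` V1 \<union> Inr ` E1. ?D (Inl y))"
      by (subst sum.reindex) simp_all
    also have "\<dots> = (\<Sum>y\<in>Inl ` V1. ?D (Inl y)) + (\<Sum>y\<in>Inr ` E1. ?D (Inl y))"
      by (rule sum.union_disjoint[OF fc dc])
    also have "(\<Sum>y\<in>Inl ` V1. ?D (Inl y)) = (\<Sum>v\<in>V1. ?D (Inl (Inl v)))"
      by (subst sum.reindex) simp_all
    also have "(\<Sum>y\<in>Inr ` E1. ?D (Inl y)) = (\<Sum>e\<in>E1. ?D (Inl (Inr e)))"
      by (subst sum.reindex) simp_all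
    also have "(\<Sum>x\<in>Inr ` V2. ?D x) = (\<Sum>w\<in>V2. ?D (Inr w))"
      by (subst sum.reindex) simp_all
    finally show ?thesis .
  qed
  have S1: "(\<Sum>v\<in>V1. ?D (Inl (Inl v))) = 8 * forgotten V1 E1 + 12 * n2 * M1 V1 E1 + 12 * card E1 * n2^2 + n1 * n2^3"
  proof -
    have "(\<Sum>v\<in>V1. ?D (Inl (Inl v))) = (\<Sum>v\<in>V1. 8 * degree E1 v ^ 3 + 12 * n2 * degree E1 v ^ 2 + 6 * n2^2 * degree E1 v + n2^3)"
      by (rule sum.cong[OF refl]) (simp add: degV1 f1 f2 n2_def power3_eq_cube power2_eq_square algebra_simps)
    also have "\<dots> = 8 * forgotten V1 E1 + 12 * n2 * M1 V1 E1 + 6 * n2^2 * (\<Sum>v\<in>V1. degree E1 v) + n1 * n2^3"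
      by (simp add: sum.distrib sum_distrib_left forgotten_def M1_def n1_def)
    finally show ?thesis using handshake[OF assms(1)] by simp
  qed
  have S3: "(\<Sum>w\<in>V2. ?D (Inr w)) = forgotten V2 E2 + 3 * n1 * M1 V2 E2 + 6 * card E2 * n1^2 + n2 * n1^3"
  proof -
    have "(\<Sum>w\<in>V2. ?D (Inr w)) = (\<Sum>w\<in>V2. degree E2 w ^ 3 + 3 * n1 * degree E2 w ^ 2 + 3 * n1^2 * degree E2 w + n1^3)"
      by (rule sum.cong[OF refl]) (simp add: degV2 f1 f2 n1_def power3_eq_cube power2_eq_square algebra_simps)
    also have "\<dots> = forgotten V2 E2 + 3 * n1 * M1 V2 E2 + 3 * n1^2 * (\<Sum>w\<in>V2. degree E2 w) + n2 * n1^3"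
      by (simp add: sum.distrib sum_distrib_left forgotten_def M1_def n2_def)
    finally show ?thesis using handshake[OF assms(3)] by simp
  qed
  have S2: "(\<Sum>e\<in>E1. ?D (Inl (Inr e))) = M4 V1 E1 + 3 * ReZM V1 E1"
  proof -
    have "(\<Sum>e\<in>E1. ?D (Inl (Inr e))) = (\<Sum>e\<in>E1. (\<Sum>u\<in>e. degree E1 u ^ 3) + 3 * ((\<Prod>v\<in>e. degree E1 v) * (\<Sum>v\<in>e. degree E1 v)))"
    proof (rule sum.cong[OF refl])
      fix e assume e: "e \<in> E1"
      obtain a b where ab: "a \<noteq> b" "e = {a, b}" using assms(1) e by (auto simp: simple_graph_def)
      show "?D (Inl (Inr e)) = (\<Sum>u\<in>e. degree E1 u ^ 3) + 3 * ((\<Prod>v\<in>e. degree E1 v) * (\<Sum>v\<in>e. degree E1 v))"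
        unfolding degE1[OF assms(1) e] using ab by (simp add: power3_eq_cube algebra_simps)
    qed
    also have "\<dots> = (\<Sum>e\<in>E1. \<Sum>u\<in>e. degree E1 u ^ 3) + 3 * ReZM V1 E1"
      by (simp add: sum.distrib sum_distrib_left ReZM_def)
    also have "(\<Sum>e\<in>E1. \<Sum>u\<in>e. degree E1 u ^ 3) = (\<Sum>v\<in>V1. degree E1 v * degree E1 v ^ 3)"
      by (rule double_count) (use f1 in auto)
    also have "\<dots> = M4 V1 E1" unfolding M4_def by (simp add: power_eq_if)
    finally show ?thesis .
  qed
  show ?thesis unfolding s0 S1 S2 S3 n1_def[symmetric] n2_def[symmetric]
    by (simp add: algebra_simps power2_eq_square power3_eq_cube)
qed

end
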